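(* Suppose condition (iv) of the context holds. Set $\theta_*:=d(2\alpha\beta-1)-2\beta$; let $\theta>\min\{\theta_*,s-2\beta\}$ if $\theta_*\ge0$, and $\theta=0$ otherwise. Then there exists $C>0$, independent of $h$, such that \[ \|(L^{-\beta}-L_h^{-\beta}\Pi_h)g\|_H\le C h^{\min\{d(2\alpha\beta-1),s\}}\|g\|_\theta \] for all $g\in\dot H^\theta$ and all sufficiently small $h\in(0,h_0)$.
   Context: $H$ is a separable real Hilbert space; $L\colon\mathscr{D}(L)\subset H\to H$ densely defined, self-adjoint, positive definite with compact inverse, $H$-orthonormal eigenvectors $\{e_j\}$, nondecreasing eigenvalues $\{\lambda_j\}$ with $c_\lambda j^\alpha\le\lambda_j\le C_\lambda j^\alpha$ ($\alpha,c_\lambda,C_\lambda>0$); $(S(t))_{t\ge0}$ the semigroup generated by $-L$. $\beta\in(0,1)$ and $2\alpha\beta>1$; $d\in\mathbb{N}$ is fixed (the exponent with $\dim V_h\propto h^{-d}$). For $\sigma\ge0$, $\dot H^\sigma:=\mathscr{D}(L^{\sigma/2})$ with $\|\psi\|_\sigma^2=\sum_j\lambda_j^\sigma(\psi,e_j)_H^2$. $(V_h)_{h\in(0,1)}$ are finite-dimensional subspaces of $\dot H^1$, $\Pi_h$ the $H$-orthogonal projection onto $V_h$, $L_h\colon V_h\to V_h$ given by $(L_h\psi_h,\phi_h)_H=\langle L\psi_h,\phi_h\rangle$, $(S_h(t))$ the semigroup on $V_h$ generated by $-L_h$. Condition (iv): there are $h_0\in(0,1)$ and $s>2\beta$ such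 that for $0\le\theta\le\sigma\le s$ there is $C_3>0$ with $\|(S(t)-S_h(t)\Pi_h)g\|_H\le C_3h^\sigma t^{(\theta-\sigma)/2}\|g\|_\theta$ for all $t>0$, $g\in\dot H^\theta$, $h\in(0,h_0)$. *)

theory Defs
  imports "HOL-Analysis.Analysis"
begin

text \<open>Spectral model: the operator L is given by its H-orthonormal eigenbasis e
  (indexed from 0, so e j is the paper's e_(j+1)) and eigenvalues lam.\<close>

definition hdot_mem :: "(nat \<Rightarrow> real) \<Rightarrow> (nat \<Rightarrow> 'a::real_inner) \<Rightarrow> real \<Rightarrow> 'a \<Rightarrow> bool" where
  "hdot_mem lam e \<sigma> x \<longleftrightarrow> summable (\<lambda>j. lam j powr \<sigma> * (x \<bullet> e j)\<^sup>2)"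

definition hdot_norm :: "(nat \<Rightarrow> real) \<Rightarrow> (nat \<Rightarrow> 'a::real_inner) \<Rightarrow> real \<Rightarrow> 'a \<Rightarrow> real" where
  "hdot_norm lam e \<sigma> x = sqrt (\<Sum>j. lam j powr \<sigma> * (x \<bullet> e j)\<^sup>2)"

definition L_pow :: "(nat \<Rightarrow> real) \<Rightarrow> (nat \<Rightarrow> 'a::{real_inner,complete_space}) \<Rightarrow> real \<Rightarrow> 'a \<Rightarrow> 'a" where
  "L_pow lam e r x = (\<Sum>j. (lam j powr r * (x \<bullet> e j)) *\<^sub>R e j)"

definition S_sg :: "(nat \<Rightarrow> real) \<Rightarrow> (nat \<Rightarrow> 'a::{real_inner,complete_space}) \<Rightarrow> real \<Rightarrow> 'a \<Rightarrow> 'a" where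
  "S_sg lam e t x = (\<Sum>j. (exp (- t * lam j) * (x \<bullet> e j)) *\<^sub>R e j)"

definition aform :: "(nat \<Rightarrow> real) \<Rightarrow> (nat \<Rightarrow> 'a::real_inner) \<Rightarrow> 'a \<Rightarrow> 'a \<Rightarrow> real" where
  "aform lam e x y = (\<Sum>j. lam j * (x \<bullet> e j) * (y \<bullet> e j))"

definition proj :: "'a::real_inner set \<Rightarrow> 'a \<Rightarrow> 'a" where
  "proj V x = (THE p. p \<in> V \<and> (\<forall>v\<in>V. (x - p) \<bullet> v = 0))"

definition L_h :: "(nat \<Rightarrow> real) \<Rightarrow> (nat \<Rightarrow> 'a::real_inner) \<Rightarrow> 'a set \<Rightarrow> 'a \<Rightarrow> 'a" where
  "L_h lam e V x = (THE y. y \<in> V \<and> (\<forall>\<phi>\<in>V. y \<bullet> \<phi> = aform lam e x \<phi>))"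

definition Lh_eigvals :: "(nat \<Rightarrow> real) \<Rightarrow> (nat \<Rightarrow> 'a::real_inner) \<Rightarrow> 'a set \<Rightarrow> real set" where
  "Lh_eigvals lam e V = {\<mu>. \<exists>v\<in>V. v \<noteq> 0 \<and> L_h lam e V v = \<mu> *\<^sub>R v}"

definition Lh_eigspace :: "(nat \<Rightarrow> real) \<Rightarrow> (nat \<Rightarrow> 'a::real_inner) \<Rightarrow> 'a set \<Rightarrow> real \<Rightarrow> 'a set" where
  "Lh_eigspace lam e V \<mu> = {v\<in>V. L_h lam e V v = \<mu> *\<^sub>R v}"

text \<open>Functional calculus of the self-adjoint L_h on V_h via its spectral decomposition:
  L_h^r x = sum over eigenvalues mu of mu^r P_mu x; S_h(t) x = sum exp(-t mu) P_mu x.\<close>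
definition Lh_pow :: "(nat \<Rightarrow> real) \<Rightarrow> (nat \<Rightarrow> 'a::real_inner) \<Rightarrow> 'a set \<Rightarrow> real \<Rightarrow> 'a \<Rightarrow> 'a" where
  "Lh_pow lam e V r x = (\<Sum>\<mu>\<in>Lh_eigvals lam e V. (\<mu> powr r) *\<^sub>R proj (Lh_eigspace lam e V \<mu>) x)"

definition Sh_sg :: "(nat \<Rightarrow> real) \<Rightarrow> (nat \<Rightarrow> 'a::real_inner) \<Rightarrow> 'a set \<Rightarrow> real \<Rightarrow> 'a \<Rightarrow> 'a" where
  "Sh_sg lam e V t x = (\<Sum>\<mu>\<in>Lh_eigvals lam e V. exp (- t * \<mu>) *\<^sub>R proj (Lh_eigspace lam e V \<mu>) x)"

end

theory Submission
  imports Defs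
begin



lemma onb_norm_sum:
  fixes e :: "nat \<Rightarrow> 'a::real_inner"
  assumes on: "\<And>i j. e i \<bullet> e j = (if i = j then 1 else 0)" and fin: "finite A"
  shows "(norm (\<Sum>j\<in>A. c j *\<^sub>R e j))\<^sup>2 = (\<Sum>j\<in>A. (c j)\<^sup>2)"
proof -
  have "(norm (\<Sum>j\<in>A. c j *\<^sub>R e j))\<^sup>2 = (\<Sum>j\<in>A. c j *\<^sub>R e j) \<bullet> (\<Sum>j\<in>A. c j *\<^sub>R e j)"
    by (simp add: power2_norm_eq_inner)
  also have "\<dots> = (\<Sum>i\<in>A. (c i)\<^sup>2)"
    using fin by (simp add: inner_sum_left inner_sum_right on power2_eq_square if_distrib cong: if_cong)
  finally show ?thesis .
qed

lemma onb_series: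
  fixes e :: "nat \<Rightarrow> 'a::{real_inner,complete_space}"
  assumes on: "\<And>i j. e i \<bullet> e j = (if i = j then 1 else 0)"
    and sc: "summable (\<lambda>j. (c j)\<^sup>2)"
  shows "summable (\<lambda>j. c j *\<^sub>R e j)"
    and "(\<lambda>j. c j * (e j \<bullet> w)) sums ((\<Sum>j. c j *\<^sub>R e j) \<bullet> w)"
proof -
  have key: "norm (\<Sum>j = m..<n. c j *\<^sub>R e j) = sqrt (\<Sum>j = m..<n. (c j)\<^sup>2)" for m n
  proof -
    have "(norm (\<Sum>j = m..<n. c j *\<^sub>R e j))\<^sup>2 = (\<Sum>j = m..<n. (c j)\<^sup>2)"
      by (rule onb_norm_sum[OF on]) simp
    then show ?thesis by (metis norm_ge_zero real_sqrt_unique)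
  qed
  have "Cauchy (\<lambda>n. \<Sum>j<n. c j *\<^sub>R e j)"
  proof (rule metric_CauchyI)
    fix r :: real assume r: "r > 0"
    then have "r\<^sup>2 > 0" by simp
    with sc obtain N where N: "\<And>m n. m \<ge> N \<Longrightarrow> norm (sum (\<lambda>j. (c j)\<^sup>2) {m..<n}) < r\<^sup>2"
      unfolding summable_Cauchy by blast
    have bnd: "norm (\<Sum>j = m..<n. c j *\<^sub>R e j) < r" if "m \<ge> N" for m n
    proof -
      have "(\<Sum>j = m..<n. (c j)\<^sup>2) < r\<^sup>2" using N[OF that, of n] by simp
      then have "sqrt (\<Sum>j = m..<n. (c j)\<^sup>2) < sqrt (r\<^sup>2)" by (simp only: real_sqrt_less_iff)
      then show ?thesis using r key by simp
    qed
    have d: "dist (\<Sum>j<m. c j *\<^sub>R e j) (\<Sum>j<n. c j *\<^sub>R e j) < r" if "N \<le> m" "m \<le> n" for m n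
    proof -
      have "(\<Sum>j<n. c j *\<^sub>R e j) - (\<Sum>j<m. c j *\<^sub>R e j) = (\<Sum>j = m..<n. c j *\<^sub>R e j)"
        using that by (metis sum_diff_nat_ivl lessThan_atLeast0 zero_le)
      then show ?thesis using bnd[OF that(1), of n] by (metis dist_norm dist_commute)
    qed
    show "\<exists>M. \<forall>m\<ge>M. \<forall>n\<ge>M. dist (\<Sum>j<m. c j *\<^sub>R e j) (\<Sum>j<n. c j *\<^sub>R e j) < r"
    proof (intro exI allI impI)
      fix m n assume "N \<le> m" "N \<le> n"
      then show "dist (\<Sum>j<m. c j *\<^sub>R e j) (\<Sum>j<n. c j *\<^sub>R e j) < r"
        using d[of m n] d[of n m] by (cases "m \<le> n") (auto simp: dist_commute)
    qed
  qed
  then show sm: "summable (\<lambda>j. c j *\<^sub>R e j)"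
    by (simp add: Cauchy_convergent summable_iff_convergent)
  have "(\<lambda>j. (c j *\<^sub>R e j) \<bullet> w) sums ((\<Sum>j. c j *\<^sub>R e j) \<bullet> w)"
    by (rule bounded_linear.sums[OF bounded_linear_inner_left summable_sums[OF sm]])
  then show "(\<lambda>j. c j * (e j \<bullet> w)) sums ((\<Sum>j. c j *\<^sub>R e j) \<bullet> w)" by simp
qed

lemma onb_parseval:
  fixes e :: "nat \<Rightarrow> 'a::{real_inner,complete_space}"
  assumes on: "\<And>i j. e i \<bullet> e j = (if i = j then 1 else 0)"
    and complete: "\<And>x. (\<lambda>j. (x \<bullet> e j) *\<^sub>R e j) sums x"
  shows "(\<lambda>j. (x \<bullet> e j)\<^sup>2) sums (norm x)\<^sup>2"
proof -
  have "(\<lambda>n. \<Sum>j<n. (x \<bullet> e j) *\<^sub>R e j) \<longlonglongrightarrow> x" using complete[of x] by (simp add: sums_def)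
  then have "(\<lambda>n. (norm (\<Sum>j<n. (x \<bullet> e j) *\<^sub>R e j))\<^sup>2) \<longlonglongrightarrow> (norm x)\<^sup>2"
    by (intro tendsto_intros)
  then show ?thesis unfolding sums_def using onb_norm_sum[OF on] by simp
qed



lemma gs_orth:
  fixes Q :: "'a::real_inner set"
  assumes fin: "finite Q" and po: "pairwise orthogonal Q" and b: "b \<in> Q"
  shows "(a - (\<Sum>u\<in>Q. (u \<bullet> a / (u \<bullet> u)) *\<^sub>R u)) \<bullet> b = 0"
proof -
  have "(\<Sum>u\<in>Q. (u \<bullet> a / (u \<bullet> u)) *\<^sub>R u) \<bullet> b = (\<Sum>u\<in>Q. if u = b then b \<bullet> a else 0)"
    unfolding inner_sum_left
  proof (rule sum.cong[OF refl])
    fix u assume u: "u \<in> Q"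
    show "((u \<bullet> a / (u \<bullet> u)) *\<^sub>R u) \<bullet> b = (if u = b then b \<bullet> a else 0)"
    proof (cases "u = b")
      case True then show ?thesis by (cases "b \<bullet> b = 0") auto
    next
      case False then have "u \<bullet> b = 0" using po u b by (auto simp: pairwise_def orthogonal_def)
      then show ?thesis using False by simp
    qed
  qed
  also have "\<dots> = b \<bullet> a" using fin b by simp
  finally show ?thesis by (simp add: inner_diff_left inner_diff_right inner_commute)
qed

lemma gs_exists:
  fixes B :: "'a::real_inner set"
  assumes "finite B"
  shows "\<exists>Q. finite Q \<and> pairwise orthogonal Q \<and> 0 \<notin> Q \<and> span Q = span B"
  using assms
proof (induction B rule: finite_induct)
  case empty then show ?case by (intro exI[of _ "{}"]) auto
next
  case (insert a B)
  then obtain Q where Q: "finite Q" "pairwise orthogonal Q" "0 \<notin> Q" "span Q = span B" by blast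
  define a' where "a' = a - (\<Sum>u\<in>Q. (u \<bullet> a / (u \<bullet> u)) *\<^sub>R u)"
  have orth: "a' \<bullet> b = 0" if "b \<in> Q" for b using gs_orth[OF Q(1,2) that] by (simp add: a'_def)
  have insq: "span (insert a' Q) = span (insert a B)"
  proof -
    have "a' - a \<in> span Q" unfolding a'_def
      by (simp add: span_neg span_sum span_mul span_base)
    then have "span (insert a' Q) = span (insert a Q)" by (rule eq_span_insert_eq)
    also have "\<dots> = span (insert a B)" using Q(4) by (simp add: span_insert)
    finally show ?thesis .
  qed
  show ?case
  proof (cases "a' = 0")
    case True
    then have "span (insert a' Q) = span Q" by simp
    then show ?thesis using Q insq by metis
  next
    case False
    have "pairwise orthogonal (insert a' Q)"
      using Q(2) orth by (intro pairwise_orthogonal_insert) (auto simp: orthogonal_def)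
    then show ?thesis using Q False insq by (intro exI[of _ "insert a' Q"]) auto
  qed
qed

lemma gs_expand:
  fixes Q :: "'a::real_inner set"
  assumes fin: "finite Q" and po: "pairwise orthogonal Q" and phi: "\<phi> \<in> span Q"
  shows "\<phi> = (\<Sum>u\<in>Q. (\<phi> \<bullet> u / (u \<bullet> u)) *\<^sub>R u)"
proof -
  define d where "d = \<phi> - (\<Sum>u\<in>Q. (u \<bullet> \<phi> / (u \<bullet> u)) *\<^sub>R u)"
  have "d \<in> span Q" unfolding d_def using phi
    by (simp add: span_diff span_sum span_mul span_base)
  moreover have "orthogonal d b" if "b \<in> Q" for b
    using gs_orth[OF fin po that] by (simp add: d_def orthogonal_def)
  ultimately have "orthogonal d d" by (metis orthogonal_to_span)
  then have "d = 0" by (simp add: orthogonal_def)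
  then show ?thesis by (simp add: d_def inner_commute)
qed

lemma abs_prod_le: "\<bar>(a::real) * b\<bar> \<le> a\<^sup>2 + b\<^sup>2"
proof -
  have "0 \<le> (\<bar>a\<bar> - \<bar>b\<bar>)\<^sup>2" by simp
  then have "2 * (\<bar>a\<bar> * \<bar>b\<bar>) \<le> a\<^sup>2 + b\<^sup>2" by (simp add: power2_eq_square algebra_simps)
  moreover have "0 \<le> \<bar>a\<bar> * \<bar>b\<bar>" by simp
  ultimately show ?thesis by (simp add: abs_mult)
    (smt (verit) zero_le_power2)
qed

lemma aform_summable:
  fixes e :: "nat \<Rightarrow> 'a::real_inner"
  assumes pos: "\<And>j. lam j > 0" and x: "hdot_mem lam e 1 x" and y: "hdot_mem lam e 1 y"
  shows "summable (\<lambda>j. lam j * (x \<bullet> e j) * (y \<bullet> e j))"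
proof -
  have sx: "summable (\<lambda>j. lam j * (x \<bullet> e j)\<^sup>2)" and sy: "summable (\<lambda>j. lam j * (y \<bullet> e j)\<^sup>2)"
    using x y pos unfolding hdot_mem_def by (simp_all add: abs_of_pos less_imp_le)
  show ?thesis
  proof (rule summable_comparison_test'[OF summable_add[OF sx sy]])
    fix n
    have "\<bar>(x \<bullet> e n) * (y \<bullet> e n)\<bar> \<le> (x \<bullet> e n)\<^sup>2 + (y \<bullet> e n)\<^sup>2"
      by (rule abs_prod_le)
    then have "lam n * \<bar>(x \<bullet> e n) * (y \<bullet> e n)\<bar> \<le> lam n * ((x \<bullet> e n)\<^sup>2 + (y \<bullet> e n)\<^sup>2)"
      using pos[of n] by (intro mult_left_mono) auto
    then show "norm (lam n * (x \<bullet> e n) * (y \<bullet> e n)) \<le> lam n * (x \<bullet> e n)\<^sup>2 + lam n * (y \<bullet> e n)\<^sup>2"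
      using pos[of n] by (simp add: abs_mult algebra_simps)
  qed
qed

lemma aform_sum:
  fixes e :: "nat \<Rightarrow> 'a::real_inner"
  assumes pos: "\<And>j. lam j > 0" and v: "hdot_mem lam e 1 v"
    and Q: "\<And>u. u \<in> Q \<Longrightarrow> hdot_mem lam e 1 u"
  shows "aform lam e v (\<Sum>u\<in>Q. c u *\<^sub>R u) = (\<Sum>u\<in>Q. c u * aform lam e v u)"
proof -
  have "aform lam e v (\<Sum>u\<in>Q. c u *\<^sub>R u) = (\<Sum>j. \<Sum>u\<in>Q. c u * (lam j * (v \<bullet> e j) * (u \<bullet> e j)))"
    unfolding aform_def by (simp add: inner_sum_left sum_distrib_left mult.commute mult.left_commute)
  also have "\<dots> = (\<Sum>u\<in>Q. \<Sum>j. c u * (lam j * (v \<bullet> e j) * (u \<bullet> e j)))"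
    by (rule suminf_sum) (intro summable_mult aform_summable[OF pos v Q])
  also have "\<dots> = (\<Sum>u\<in>Q. c u * aform lam e v u)"
    unfolding aform_def by (intro sum.cong refl suminf_mult aform_summable[OF pos v Q])
  finally show ?thesis .
qed

lemma Lh_char:
  fixes e :: "nat \<Rightarrow> 'a::real_inner"
  assumes pos: "\<And>j. lam j > 0" and fin: "finite B" and VH1: "span B \<subseteq> {x. hdot_mem lam e 1 x}"
    and v: "v \<in> span B"
  shows "L_h lam e (span B) v \<in> span B \<and> (\<forall>\<phi>\<in>span B. L_h lam e (span B) v \<bullet> \<phi> = aform lam e v \<phi>)"
proof -
  obtain Q where Q: "finite Q" "pairwise orthogonal Q" "0 \<notin> Q" "span Q = span B"
    using gs_exists[OF fin] by blast
  have QH: "hdot_mem lam e 1 u" if "u \<in> Q" for u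
    using VH1 Q(4) span_base[OF that] by auto
  have vH: "hdot_mem lam e 1 v" using VH1 v by auto
  define y where "y = (\<Sum>u\<in>Q. (aform lam e v u / (u \<bullet> u)) *\<^sub>R u)"
  have yV: "y \<in> span B" unfolding y_def Q(4)[symmetric]
    by (simp add: span_sum span_mul span_base)
  have yP: "y \<bullet> \<phi> = aform lam e v \<phi>" if "\<phi> \<in> span B" for \<phi>
  proof -
    have phi: "\<phi> = (\<Sum>u\<in>Q. (\<phi> \<bullet> u / (u \<bullet> u)) *\<^sub>R u)"
      using gs_expand[OF Q(1,2)] that Q(4) by blast
    have "aform lam e v \<phi> = (\<Sum>u\<in>Q. (\<phi> \<bullet> u / (u \<bullet> u)) * aform lam e v u)"
      by (subst phi) (rule aform_sum[OF pos vH QH])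
    also have "\<dots> = y \<bullet> \<phi>"
      unfolding y_def inner_sum_left by (simp add: inner_commute mult.commute)
    finally show ?thesis by simp
  qed
  have uniq: "z = y" if "z \<in> span B" "\<forall>\<phi>\<in>span B. z \<bullet> \<phi> = aform lam e v \<phi>" for z
  proof -
    have d: "z - y \<in> span B" using that(1) yV by (simp add: span_diff)
    have "(z - y) \<bullet> (z - y) = 0"
      using that(2) yP[OF d] d by (simp add: inner_diff_left)
    then show ?thesis by simp
  qed
  have "\<exists>!z. z \<in> span B \<and> (\<forall>\<phi>\<in>span B. z \<bullet> \<phi> = aform lam e v \<phi>)"
    using yV yP uniq by blast
  then show ?thesis unfolding L_h_def by (rule theI')
qed

lemma eig_pos:
  fixes e :: "nat \<Rightarrow> 'a::real_inner"
  assumes pos: "\<And>j. lam j > 0" and fin: "finite B" and VH1: "span B \<subseteq> {x. hdot_mem lam e 1 x}"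
    and complete: "\<And>x. (\<lambda>j. (x \<bullet> e j) *\<^sub>R e j) sums x"
    and mu: "\<mu> \<in> Lh_eigvals lam e (span B)"
  shows "\<mu> > 0"
proof -
  obtain v where v: "v \<in> span B" "v \<noteq> 0" "L_h lam e (span B) v = \<mu> *\<^sub>R v"
    using mu unfolding Lh_eigvals_def by blast
  have vH: "hdot_mem lam e 1 v" using VH1 v by auto
  have "\<mu> * (v \<bullet> v) = aform lam e v v"
    using Lh_char[OF pos fin VH1 v(1)] v by auto
  also have "\<dots> > 0"
  proof -
    obtain j where j: "v \<bullet> e j \<noteq> 0"
    proof (rule ccontr)
      assume "\<not> thesis"
      then have "\<forall>j. v \<bullet> e j = 0" using that by blast
      then have "(\<lambda>j. 0) sums v" using complete[of v] by simp
      then show False using v(2) sums_zero sums_unique2 by blast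
    qed
    show ?thesis unfolding aform_def
    proof (rule suminf_pos2[of _ j])
      show "summable (\<lambda>j. lam j * (v \<bullet> e j) * (v \<bullet> e j))" by (rule aform_summable[OF pos vH vH])
      show "0 \<le> lam n * (v \<bullet> e n) * (v \<bullet> e n)" for n using pos[of n] by (simp add: mult.assoc)
      show "0 < lam j * (v \<bullet> e j) * (v \<bullet> e j)" using pos[of j] j by (simp add: mult.assoc zero_less_mult_iff) linarith
    qed
  qed
  finally have "\<mu> * (v \<bullet> v) > 0" .
  moreover have "v \<bullet> v > 0" using v(2) by simp
  ultimately show ?thesis by (simp add: zero_less_mult_iff)
qed



lemma gamma_int:
  fixes b l :: real
  assumes b: "b > 0" and l: "l > 0"
  shows "integrable lborel (\<lambda>t. indicator {0<..} t * (t powr (b - 1) * exp (- t * l)))"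
    and "integral\<^sup>L lborel (\<lambda>t. indicator {0<..} t * (t powr (b - 1) * exp (- t * l))) = Gamma b * l powr (- b)"
proof -
  define f where "f = (\<lambda>t::real. ennreal (indicator {0..} t * t powr (b - 1) / exp t))"
  have fm: "f \<in> borel_measurable borel" unfolding f_def by measurable
  have "ennreal (Gamma b) = (\<integral>\<^sup>+x. f x \<partial>lborel)"
    using Gamma_conv_nn_integral_real[OF b] by (simp add: f_def)
  also have "\<dots> = ennreal \<bar>l\<bar> * (\<integral>\<^sup>+x. f (0 + l * x) \<partial>lborel)"
    by (rule nn_integral_real_affine[OF fm]) (use l in simp)
  also have "(\<lambda>x. f (0 + l * x)) = (\<lambda>x. ennreal (l powr (b - 1)) * ennreal (indicator {0<..} x * (x powr (b - 1) * exp (- x * l))))"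
  proof
    fix x :: real
    show "f (0 + l * x) = ennreal (l powr (b - 1)) * ennreal (indicator {0<..} x * (x powr (b - 1) * exp (- x * l)))"
    proof (cases "x > 0")
      case True
      then have "(l * x) powr (b - 1) = l powr (b - 1) * x powr (b - 1)" using l by (simp add: powr_mult)
      moreover have "exp (- x * l) = inverse (exp (l * x))" by (simp add: exp_minus mult.commute)
      ultimately show ?thesis using True l unfolding f_def
        by (simp add: ennreal_mult'[symmetric] divide_inverse mult.assoc mult.left_commute)
    next
      case False
      then have "indicator {0..} (l * x) * (l * x) powr (b - 1) = (0::real)"
        using l by (cases "x = 0") (auto simp: indicator_def zero_le_mult_iff)
      then show ?thesis using False unfolding f_def by (simp add: indicator_def)
    qed
  qed
  finally have eq: "ennreal (Gamma b) = ennreal l * ennreal (l powr (b - 1)) *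
        (\<integral>\<^sup>+x. ennreal (indicator {0<..} x * (x powr (b - 1) * exp (- x * l))) \<partial>lborel)"
    using l by (simp add: nn_integral_cmult mult.assoc)
  have lp: "ennreal l * ennreal (l powr (b - 1)) = ennreal (l powr b)"
    using l by (simp add: ennreal_mult'[symmetric] powr_diff)
  have "(\<integral>\<^sup>+x. ennreal (indicator {0<..} x * (x powr (b - 1) * exp (- x * l))) \<partial>lborel)
        = ennreal (Gamma b * l powr (- b))"
  proof -
    have ne: "ennreal (l powr b) \<noteq> 0" "ennreal (l powr b) \<noteq> top" using l by auto
    have "ennreal (Gamma b * l powr (- b)) = ennreal (Gamma b) * ennreal (l powr (- b))"
      using b l by (simp add: ennreal_mult' Gamma_real_pos less_imp_le)
    also have "\<dots> = ennreal (l powr b) * ennreal (l powr (- b)) *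
        (\<integral>\<^sup>+x. ennreal (indicator {0<..} x * (x powr (b - 1) * exp (- x * l))) \<partial>lborel)"
      using eq lp by (simp add: mult.commute mult.left_commute mult.assoc)
    also have "ennreal (l powr b) * ennreal (l powr (- b)) = 1"
      using l by (simp add: ennreal_mult'[symmetric] powr_minus)
    finally show ?thesis by simp
  qed
  then have "integrable lborel (\<lambda>t. indicator {0<..} t * (t powr (b - 1) * exp (- t * l))) \<and>
    integral\<^sup>L lborel (\<lambda>t. indicator {0<..} t * (t powr (b - 1) * exp (- t * l))) = Gamma b * l powr (- b)"
    by (subst nn_integral_eq_integrable[symmetric]) (use b l in \<open>auto simp: Gamma_real_pos less_imp_le\<close>)
  then show "integrable lborel (\<lambda>t. indicator {0<..} t * (t powr (b - 1) * exp (- t * l)))"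
    and "integral\<^sup>L lborel (\<lambda>t. indicator {0<..} t * (t powr (b - 1) * exp (- t * l))) = Gamma b * l powr (- b)"
    by auto
qed

lemma powr_int0:
  fixes q :: real assumes q: "q > -1"
  shows "integrable lborel (\<lambda>t. indicator {0<..1} t * t powr q)"
proof -
  have "(\<lambda>x. x powr q) integrable_on {0<..1::real}" by (rule integrable_on_powr_from_0') (use q in auto)
  then have "set_integrable lebesgue {0<..1::real} (\<lambda>x. x powr q)"
    by (rule nonnegative_absolutely_integrable_1) auto
  then have "integrable lebesgue (\<lambda>t. indicator {0<..1::real} t * t powr q)"
    by (simp add: set_integrable_def)
  moreover have "(\<lambda>t. indicator {0<..1::real} t * t powr q) \<in> borel_measurable lborel" by measurable
  ultimately show ?thesis by (simp add: integrable_completion)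
qed

lemma powr_int1:
  fixes q :: real assumes q: "q < -1"
  shows "integrable lborel (\<lambda>t. indicator {1<..} t * t powr q)"
proof -
  have "(\<lambda>x. x powr q) integrable_on {(1::real)..}"
    using has_integral_powr_to_inf[OF q, of 1] unfolding integrable_on_def by auto
  then have "set_integrable lebesgue {(1::real)..} (\<lambda>x. x powr q)"
    by (rule nonnegative_absolutely_integrable_1) auto
  then have "set_integrable lebesgue {(1::real)<..} (\<lambda>x. x powr q)"
    by (rule set_integrable_subset) auto
  then have "integrable lebesgue (\<lambda>t. indicator {(1::real)<..} t * t powr q)"
    by (simp add: set_integrable_def)
  moreover have "(\<lambda>t. indicator {(1::real)<..} t * t powr q) \<in> borel_measurable lborel" by measurable
  ultimately show ?thesis by (simp add: integrable_completion)
qed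

lemma hdot_cmp:
  fixes e :: "nat \<Rightarrow> 'a::real_inner"
  assumes l0: "l0 > 0" and lge: "\<And>j. lam j \<ge> l0" and th: "0 \<le> th" "th \<le> \<theta>"
    and g: "hdot_mem lam e \<theta> g"
  shows "hdot_mem lam e th g" and "hdot_norm lam e th g \<le> l0 powr ((th - \<theta>) / 2) * hdot_norm lam e \<theta> g"
proof -
  have le: "lam j powr th * (g \<bullet> e j)\<^sup>2 \<le> l0 powr (th - \<theta>) * (lam j powr \<theta> * (g \<bullet> e j)\<^sup>2)" for j
  proof -
    have lp: "lam j > 0" using l0 lge[of j] by linarith
    have "lam j powr th = lam j powr \<theta> * lam j powr (th - \<theta>)"
      by (simp add: powr_add[symmetric])
    also have "\<dots> \<le> lam j powr \<theta> * l0 powr (th - \<theta>)"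
      by (intro mult_left_mono powr_mono2') (use th l0 lge[of j] in auto)
    finally have "lam j powr th \<le> l0 powr (th - \<theta>) * lam j powr \<theta>" by (simp add: mult.commute)
    then have "lam j powr th * (g \<bullet> e j)\<^sup>2 \<le> (l0 powr (th - \<theta>) * lam j powr \<theta>) * (g \<bullet> e j)\<^sup>2"
      by (rule mult_right_mono) simp
    then show ?thesis by (simp add: mult.assoc)
  qed
  have s\<theta>: "summable (\<lambda>j. lam j powr \<theta> * (g \<bullet> e j)\<^sup>2)" using g by (simp add: hdot_mem_def)
  have sth: "summable (\<lambda>j. lam j powr th * (g \<bullet> e j)\<^sup>2)"
    proof (rule summable_comparison_test'[OF summable_mult[OF s\<theta>, of "l0 powr (th - \<theta>)"]])
    fix j show "norm (lam j powr th * (g \<bullet> e j)\<^sup>2) \<le> l0 powr (th - \<theta>) * (lam j powr \<theta> * (g \<bullet> e j)\<^sup>2)"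
      using le[of j] by simp
  qed
  then show "hdot_mem lam e th g" by (simp add: hdot_mem_def)
  have "(\<Sum>j. lam j powr th * (g \<bullet> e j)\<^sup>2) \<le> (\<Sum>j. l0 powr (th - \<theta>) * (lam j powr \<theta> * (g \<bullet> e j)\<^sup>2))"
    by (intro suminf_le le sth summable_mult s\<theta>)
  also have "\<dots> = l0 powr (th - \<theta>) * (\<Sum>j. lam j powr \<theta> * (g \<bullet> e j)\<^sup>2)"
    by (rule suminf_mult[OF s\<theta>])
  finally have "sqrt (\<Sum>j. lam j powr th * (g \<bullet> e j)\<^sup>2) \<le> sqrt (l0 powr (th - \<theta>)) * sqrt (\<Sum>j. lam j powr \<theta> * (g \<bullet> e j)\<^sup>2)"
    by (simp only: real_sqrt_mult[symmetric] real_sqrt_le_mono)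
  also have "sqrt (l0 powr (th - \<theta>)) = l0 powr ((th - \<theta>) / 2)"
  proof -
    have "sqrt (l0 powr (th - \<theta>)) = (l0 powr (th - \<theta>)) powr (1/2)" by (simp add: powr_half_sqrt)
    also have "\<dots> = l0 powr ((th - \<theta>) / 2)" by (simp add: powr_powr)
    finally show ?thesis .
  qed
  finally show "hdot_norm lam e th g \<le> l0 powr ((th - \<theta>) / 2) * hdot_norm lam e \<theta> g"
    by (simp add: hdot_norm_def)
qed


theorem lemma3p3:
  fixes e :: "nat \<Rightarrow> 'a::{real_inner,complete_space}"
    and lam :: "nat \<Rightarrow> real"
    and V :: "real \<Rightarrow> 'a set"
    and \<alpha> \<beta> c_lam C_lam h0 s \<theta> :: real
    and d :: nat
  assumes orthonormal: "\<And>i j. e i \<bullet> e j = (if i = j then 1 else 0)"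
    and complete: "\<And>x. (\<lambda>j. (x \<bullet> e j) *\<^sub>R e j) sums x"
    and lam_mono: "mono lam"
    and alpha_pos: "\<alpha> > 0" and c_pos: "c_lam > 0" and C_pos: "C_lam > 0"
    and lam_bounds: "\<And>j. c_lam * real (Suc j) powr \<alpha> \<le> lam j \<and> lam j \<le> C_lam * real (Suc j) powr \<alpha>"
    and beta: "0 < \<beta>" "\<beta> < 1" and two_alpha_beta: "2 * \<alpha> * \<beta> > 1"
    and Vh_subspace: "\<And>h. 0 < h \<Longrightarrow> h < 1 \<Longrightarrow> subspace (V h)"
    and Vh_findim: "\<And>h. 0 < h \<Longrightarrow> h < 1 \<Longrightarrow> \<exists>B. finite B \<and> V h = span B"
    and Vh_H1: "\<And>h. 0 < h \<Longrightarrow> h < 1 \<Longrightarrow> V h \<subseteq> {x. hdot_mem lam e 1 x}"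
    and Vh_dim: "\<exists>c1 c2. c1 > 0 \<and> c2 > 0 \<and> (\<forall>h. 0 < h \<and> h < 1 \<longrightarrow>
                   c1 * h powr (- real d) \<le> real (dim (V h)) \<and> real (dim (V h)) \<le> c2 * h powr (- real d))"
    and h0_bounds: "0 < h0" "h0 < 1"
    and s_gt: "s > 2 * \<beta>"
    and cond_iv: "\<And>th \<sigma>. 0 \<le> th \<Longrightarrow> th \<le> \<sigma> \<Longrightarrow> \<sigma> \<le> s \<Longrightarrow>
        \<exists>C3>0. \<forall>t g h. 0 < t \<and> hdot_mem lam e th g \<and> 0 < h \<and> h < h0 \<longrightarrow>
          norm (S_sg lam e t g - Sh_sg lam e (V h) t (proj (V h) g))
            \<le> C3 * h powr \<sigma> * t powr ((th - \<sigma>) / 2) * hdot_norm lam e th g"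
    and theta_choice: "let theta_star = real d * (2 * \<alpha> * \<beta> - 1) - 2 * \<beta> in
        (theta_star \<ge> 0 \<longrightarrow> \<theta> > min theta_star (s - 2 * \<beta>)) \<and> (theta_star < 0 \<longrightarrow> \<theta> = 0)"
  shows "\<exists>C>0. \<exists>h1>0. \<forall>h g. 0 < h \<and> h < h1 \<and> h < h0 \<and> hdot_mem lam e \<theta> g \<longrightarrow>
           norm (L_pow lam e (- \<beta>) g - Lh_pow lam e (V h) (- \<beta>) (proj (V h) g))
             \<le> C * h powr (min (real d * (2 * \<alpha> * \<beta> - 1)) s) * hdot_norm lam e \<theta> g"
proof -
  have lpos: "lam j > 0" for j
  proof -
    have "c_lam * real (Suc j) powr \<alpha> > 0" using c_pos by simp
    then show ?thesis using lam_bounds[of j] by linarith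
  qed
  define l0 where "l0 = lam 0"
  have l0: "l0 > 0" using lpos by (simp add: l0_def)
  have lge: "lam j \<ge> l0" for j using lam_mono unfolding l0_def by (simp add: monoD)
  define r where "r = min (real d * (2 * \<alpha> * \<beta> - 1)) s"
  have r0: "r \<ge> 0" using two_alpha_beta s_gt beta by (simp add: r_def)
  have rs: "r \<le> s" by (simp add: r_def)
  have th0: "\<theta> \<ge> 0" and thr: "\<theta> > r - 2 * \<beta>"
  proof -
    define ts where "ts = real d * (2 * \<alpha> * \<beta> - 1) - 2 * \<beta>"
    have tc: "(ts \<ge> 0 \<longrightarrow> \<theta> > min ts (s - 2 * \<beta>)) \<and> (ts < 0 \<longrightarrow> \<theta> = 0)"
      using theta_choice by (simp add: ts_def Let_def)
    have rts: "r - 2 * \<beta> = min ts (s - 2 * \<beta>)" by (simp add: r_def ts_def min_diff_distrib_left)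
    show "\<theta> \<ge> 0" using tc s_gt by (cases "ts \<ge> 0") auto
    show "\<theta> > r - 2 * \<beta>" using tc s_gt rts beta by (cases "ts \<ge> 0") auto
  qed
  define tA where "tA = min \<theta> r"
  have tA: "0 \<le> tA" "tA \<le> \<theta>" "tA \<le> r" using th0 r0 by (auto simp: tA_def)
  obtain C3a where C3a: "C3a > 0" and bA: "\<And>t g h. 0 < t \<Longrightarrow> hdot_mem lam e tA g \<Longrightarrow> 0 < h \<Longrightarrow> h < h0 \<Longrightarrow>
          norm (S_sg lam e t g - Sh_sg lam e (V h) t (proj (V h) g))
            \<le> C3a * h powr r * t powr ((tA - r) / 2) * hdot_norm lam e tA g"
    using cond_iv[OF tA(1) tA(3) rs] by blast
  obtain C3b where C3b: "C3b > 0" and bB: "\<And>t g h. 0 < t \<Longrightarrow> hdot_mem lam e 0 g \<Longrightarrow> 0 < h \<Longrightarrow> h < h0 \<Longrightarrow>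
          norm (S_sg lam e t g - Sh_sg lam e (V h) t (proj (V h) g))
            \<le> C3b * h powr s * t powr ((0 - s) / 2) * hdot_norm lam e 0 g"
    using cond_iv[of 0 s] s_gt beta by auto
  define qA where "qA = \<beta> - 1 + (tA - r) / 2"
  have qA: "qA > -1"
  proof (cases "\<theta> \<le> r")
    case True then show ?thesis using thr by (simp add: qA_def tA_def field_simps)
  next
    case False then show ?thesis using beta by (simp add: qA_def tA_def)
  qed
  define qB where "qB = \<beta> - 1 - s / 2"
  have qB: "qB < -1" using s_gt by (simp add: qB_def)
  define J1 where "J1 = integral\<^sup>L lborel (\<lambda>t. indicator {0<..1} t * t powr qA)"
  define J2 where "J2 = integral\<^sup>L lborel (\<lambda>t. indicator {1<..} t * t powr qB)"
  have intJ1: "integrable lborel (\<lambda>t. indicator {0<..1} t * t powr qA)" by (rule powr_int0[OF qA])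
  have intJ2: "integrable lborel (\<lambda>t. indicator {1<..} t * t powr qB)" by (rule powr_int1[OF qB])
  have J1: "J1 \<ge> 0" unfolding J1_def by (intro integral_nonneg_AE) (auto simp: indicator_def)
  have J2: "J2 \<ge> 0" unfolding J2_def by (intro integral_nonneg_AE) (auto simp: indicator_def)
  define KA where "KA = C3a * l0 powr ((tA - \<theta>) / 2)"
  define KB where "KB = C3b * l0 powr ((0 - \<theta>) / 2)"
  have KA: "KA > 0" and KB: "KB > 0" using C3a C3b l0 by (auto simp: KA_def KB_def)
  have Gp: "Gamma \<beta> > 0" using beta by (simp add: Gamma_real_pos)
  define C where "C = (KA * J1 + KB * J2) / Gamma \<beta> + 1"
  have Cpos: "C > 0" using KA KB J1 J2 Gp by (simp add: C_def add_nonneg_pos)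
  have main: "norm (L_pow lam e (- \<beta>) g - Lh_pow lam e (V h) (- \<beta>) (proj (V h) g))
             \<le> C * h powr r * hdot_norm lam e \<theta> g"
    if h: "0 < h" "h < h0" and g: "hdot_mem lam e \<theta> g" for h g
  proof -
    have h1: "h < 1" using h h0_bounds by linarith
    obtain B where B: "finite B" "V h = span B" using Vh_findim[OF h(1) h1] by blast
    have VH1: "span B \<subseteq> {x. hdot_mem lam e 1 x}" using Vh_H1[OF h(1) h1] B(2) by simp
    define M where "M = Lh_eigvals lam e (V h)"
    have mupos: "\<mu> > 0" if "\<mu> \<in> M" for \<mu>
      using eig_pos[OF lpos B(1) VH1 complete] that B(2) by (simp add: M_def)
    define x where "x = proj (V h) g"
    define P where "P = (\<lambda>\<mu>. proj (Lh_eigspace lam e (V h) \<mu>) x)"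
    define E where "E = L_pow lam e (- \<beta>) g - Lh_pow lam e (V h) (- \<beta>) x"
    define Ng where "Ng = hdot_norm lam e \<theta> g"
    have Ng: "Ng \<ge> 0" using g lpos by (simp add: Ng_def hdot_norm_def hdot_mem_def suminf_nonneg)
    have gsum: "(\<lambda>j. (g \<bullet> e j)\<^sup>2) sums (norm g)\<^sup>2" by (rule onb_parseval[OF orthonormal complete])
    have Esum: "(\<lambda>j. (E \<bullet> e j)\<^sup>2) sums (norm E)\<^sup>2" by (rule onb_parseval[OF orthonormal complete])
    define a where "a = (\<lambda>j. (g \<bullet> e j) * (e j \<bullet> E))"
    have asum: "summable (\<lambda>j. \<bar>a j\<bar>)"
    proof (rule summable_comparison_test'[OF summable_add[OF sums_summable[OF gsum] sums_summable[OF Esum]]])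
      fix j show "norm \<bar>a j\<bar> \<le> (g \<bullet> e j)\<^sup>2 + (E \<bullet> e j)\<^sup>2"
        using abs_prod_le[of "g \<bullet> e j" "E \<bullet> e j"] by (simp add: a_def inner_commute)
    qed
    define b where "b = (\<lambda>\<mu>. P \<mu> \<bullet> E)"
    have F1: "(\<lambda>j. lam j powr (- \<beta>) * a j) sums (L_pow lam e (- \<beta>) g \<bullet> E)"
    proof -
      have "summable (\<lambda>j. (lam j powr (- \<beta>) * (g \<bullet> e j))\<^sup>2)"
      proof (rule summable_comparison_test'[OF summable_mult[OF sums_summable[OF gsum], of "(l0 powr (- \<beta>))\<^sup>2"]])
        fix j
        have "lam j powr (- \<beta>) \<le> l0 powr (- \<beta>)" by (rule powr_mono2') (use beta l0 lge[of j] in auto)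
        then have "(lam j powr (- \<beta>))\<^sup>2 \<le> (l0 powr (- \<beta>))\<^sup>2" by (intro power_mono) auto
        then show "norm ((lam j powr (- \<beta>) * (g \<bullet> e j))\<^sup>2) \<le> (l0 powr (- \<beta>))\<^sup>2 * (g \<bullet> e j)\<^sup>2"
          by (simp add: power_mult_distrib mult_right_mono)
      qed
      from onb_series(2)[OF orthonormal this, of E] show ?thesis
        by (simp add: L_pow_def a_def mult.assoc)
    qed
    have F3: "(\<lambda>j. exp (- t * lam j) * a j) sums (S_sg lam e t g \<bullet> E)" if t: "t \<ge> 0" for t
    proof -
      have "summable (\<lambda>j. (exp (- t * lam j) * (g \<bullet> e j))\<^sup>2)"
      proof (rule summable_comparison_test'[OF sums_summable[OF gsum]])
        fix j
        have "exp (- t * lam j) \<le> 1" using t lpos[of j] by (simp add: mult_nonneg_nonneg)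
        then have "(exp (- t * lam j))\<^sup>2 \<le> 1" by (simp add: power_le_one)
        then show "norm ((exp (- t * lam j) * (g \<bullet> e j))\<^sup>2) \<le> (g \<bullet> e j)\<^sup>2"
          using mult_right_mono[of "(exp (- t * lam j))\<^sup>2" 1 "(g \<bullet> e j)\<^sup>2"] by (simp add: power_mult_distrib)
      qed
      from onb_series(2)[OF orthonormal this, of E] show ?thesis
        by (simp add: S_sg_def a_def mult.assoc)
    qed
    have F2: "Lh_pow lam e (V h) (- \<beta>) x \<bullet> E = (\<Sum>\<mu>\<in>M. \<mu> powr (- \<beta>) * b \<mu>)"
      by (simp add: Lh_pow_def M_def b_def P_def inner_sum_left)
    have F4: "Sh_sg lam e (V h) t x \<bullet> E = (\<Sum>\<mu>\<in>M. exp (- t * \<mu>) * b \<mu>)" for t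
      by (simp add: Sh_sg_def M_def b_def P_def inner_sum_left)
    define ind where "ind = (\<lambda>t::real. indicator {0<..} t :: real)"
    define k where "k = (\<lambda>t::real. t powr (\<beta> - 1))"
    define \<Phi> where "\<Phi> = (\<lambda>t. ind t * k t * (S_sg lam e t g \<bullet> E))"
    define \<Psi> where "\<Psi> = (\<lambda>t. ind t * k t * (Sh_sg lam e (V h) t x \<bullet> E))"
    have I1: "integrable lborel \<Phi> \<and> integral\<^sup>L lborel \<Phi> = Gamma \<beta> * (L_pow lam e (- \<beta>) g \<bullet> E)"
    proof -
      define fA where "fA = (\<lambda>j t. indicator {0<..} t * (t powr (\<beta> - 1) * exp (- t * lam j)) * a j)"
      have gi: "integrable lborel (\<lambda>t. indicator {0<..} t * (t powr (\<beta> - 1) * exp (- t * lam j)))"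
        "integral\<^sup>L lborel (\<lambda>t. indicator {0<..} t * (t powr (\<beta> - 1) * exp (- t * lam j))) = Gamma \<beta> * lam j powr (- \<beta>)" for j
        using gamma_int[OF beta(1) lpos[of j]] by auto
      have intA: "integrable lborel (fA j)" for j unfolding fA_def using gi(1)[of j] by simp
      have nfA: "\<bar>fA j t\<bar> = indicator {0<..} t * (t powr (\<beta> - 1) * exp (- t * lam j)) * \<bar>a j\<bar>" for j t
        by (simp add: fA_def abs_mult indicator_def)
      have sA: "summable (\<lambda>j. norm (fA j t))" for t
      proof (cases "t > 0")
        case False then show ?thesis by (simp add: fA_def indicator_def)
      next
        case True
        show ?thesis
        proof (rule summable_comparison_test'[OF summable_mult[OF asum, of "t powr (\<beta> - 1)"]])
          fix j
          have "exp (- t * lam j) \<le> 1" using True lpos[of j] by simp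
          then have "t powr (\<beta> - 1) * exp (- t * lam j) * \<bar>a j\<bar> \<le> t powr (\<beta> - 1) * 1 * \<bar>a j\<bar>"
            by (intro mult_right_mono mult_left_mono) auto
          then show "norm (norm (fA j t)) \<le> t powr (\<beta> - 1) * \<bar>a j\<bar>" using True by (simp add: nfA)
        qed
      qed
      have inorm: "integral\<^sup>L lborel (\<lambda>t. norm (fA j t)) = Gamma \<beta> * lam j powr (- \<beta>) * \<bar>a j\<bar>" for j
        using gi(2)[of j] by (simp add: nfA)
      have sI: "summable (\<lambda>j. integral\<^sup>L lborel (\<lambda>t. norm (fA j t)))"
      proof (rule summable_comparison_test'[OF summable_mult[OF asum, of "Gamma \<beta> * l0 powr (- \<beta>)"]])
        fix j
        have "lam j powr (- \<beta>) \<le> l0 powr (- \<beta>)" by (rule powr_mono2') (use beta l0 lge[of j] in auto)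
        then have "Gamma \<beta> * lam j powr (- \<beta>) * \<bar>a j\<bar> \<le> Gamma \<beta> * l0 powr (- \<beta>) * \<bar>a j\<bar>"
          using Gp by (intro mult_right_mono mult_left_mono) auto
        then show "norm (integral\<^sup>L lborel (\<lambda>t. norm (fA j t))) \<le> Gamma \<beta> * l0 powr (- \<beta>) * \<bar>a j\<bar>"
          unfolding inorm using Gp by simp
      qed
      have eqP: "(\<lambda>t. \<Sum>j. fA j t) = \<Phi>"
      proof
        fix t
        show "(\<Sum>j. fA j t) = \<Phi> t"
        proof (cases "t > 0")
          case False then show ?thesis by (simp add: fA_def \<Phi>_def ind_def)
        next
          case True
          have "(\<Sum>j. fA j t) = (\<Sum>j. t powr (\<beta> - 1) * (exp (- t * lam j) * a j))"
            using True by (simp add: fA_def mult.assoc)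
          also have "\<dots> = t powr (\<beta> - 1) * (\<Sum>j. exp (- t * lam j) * a j)"
            by (rule suminf_mult[OF sums_summable[OF F3]]) (use True in simp)
          also have "(\<Sum>j. exp (- t * lam j) * a j) = S_sg lam e t g \<bullet> E"
            by (rule sums_unique[symmetric, OF F3]) (use True in simp)
          finally show ?thesis using True by (simp add: \<Phi>_def ind_def k_def)
        qed
      qed
      have "integrable lborel (\<lambda>t. \<Sum>j. fA j t)"
        by (rule integrable_suminf[OF intA AE_I2[OF sA] sI])
      moreover have "integral\<^sup>L lborel (\<lambda>t. \<Sum>j. fA j t) = (\<Sum>j. integral\<^sup>L lborel (fA j))"
        by (rule integral_suminf[OF intA AE_I2[OF sA] sI])
      moreover have "integral\<^sup>L lborel (fA j) = Gamma \<beta> * (lam j powr (- \<beta>) * a j)" for j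
        unfolding fA_def using gi(2)[of j] by simp
      moreover have "(\<Sum>j. Gamma \<beta> * (lam j powr (- \<beta>) * a j)) = Gamma \<beta> * (L_pow lam e (- \<beta>) g \<bullet> E)"
        by (simp add: suminf_mult[OF sums_summable[OF F1]] sums_unique[OF F1, symmetric])
      ultimately show ?thesis using eqP by simp
    qed
    have I2: "integrable lborel \<Psi> \<and> integral\<^sup>L lborel \<Psi> = Gamma \<beta> * (Lh_pow lam e (V h) (- \<beta>) x \<bullet> E)"
    proof -
      define fB where "fB = (\<lambda>\<mu> t. indicator {0<..} t * (t powr (\<beta> - 1) * exp (- t * \<mu>)) * b \<mu>)"
      have gi: "integrable lborel (\<lambda>t. indicator {0<..} t * (t powr (\<beta> - 1) * exp (- t * \<mu>)))"
        "integral\<^sup>L lborel (\<lambda>t. indicator {0<..} t * (t powr (\<beta> - 1) * exp (- t * \<mu>))) = Gamma \<beta> * \<mu> powr (- \<beta>)"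
        if "\<mu> \<in> M" for \<mu>
        using gamma_int[OF beta(1) mupos[OF that]] by auto
      have intB: "integrable lborel (fB \<mu>)" if "\<mu> \<in> M" for \<mu> unfolding fB_def using gi(1)[OF that] by simp
      have eqP: "(\<lambda>t. \<Sum>\<mu>\<in>M. fB \<mu> t) = \<Psi>"
      proof
        fix t
        show "(\<Sum>\<mu>\<in>M. fB \<mu> t) = \<Psi> t"
          unfolding \<Psi>_def F4 by (simp add: fB_def ind_def k_def sum_distrib_left mult_ac)
      qed
      have "integrable lborel (\<lambda>t. \<Sum>\<mu>\<in>M. fB \<mu> t)" using intB by simp
      moreover have "integral\<^sup>L lborel (\<lambda>t. \<Sum>\<mu>\<in>M. fB \<mu> t) = (\<Sum>\<mu>\<in>M. integral\<^sup>L lborel (fB \<mu>))"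
        by (rule Bochner_Integration.integral_sum) (rule intB)
      moreover have "(\<Sum>\<mu>\<in>M. integral\<^sup>L lborel (fB \<mu>)) = (\<Sum>\<mu>\<in>M. Gamma \<beta> * (\<mu> powr (- \<beta>) * b \<mu>))"
        by (rule sum.cong[OF refl]) (use gi(2) in \<open>simp add: fB_def\<close>)
      ultimately show ?thesis using eqP F2 by (simp add: sum_distrib_left)
    qed
    have Id: "integral\<^sup>L lborel (\<lambda>t. \<Phi> t - \<Psi> t) = Gamma \<beta> * (norm E)\<^sup>2"
      using I1 I2 by (simp add: E_def inner_diff_left power2_norm_eq_inner algebra_simps)
    define bd where "bd = (\<lambda>t. (h powr r * Ng * norm E) * (KA * (indicator {0<..1} t * t powr qA) + KB * (indicator {1<..} t * t powr qB)))"
    have bdint: "integrable lborel bd" unfolding bd_def using intJ1 intJ2 by simp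
    have bdval: "integral\<^sup>L lborel bd = (h powr r * Ng * norm E) * (KA * J1 + KB * J2)"
      unfolding bd_def J1_def J2_def using intJ1 intJ2 by simp
    have bd0: "0 \<le> bd t" for t
      unfolding bd_def using Ng KA KB by (auto simp: indicator_def intro!: mult_nonneg_nonneg add_nonneg_nonneg)
    have memA: "hdot_mem lam e tA g" and nA: "hdot_norm lam e tA g \<le> l0 powr ((tA - \<theta>) / 2) * Ng"
      using hdot_cmp[OF l0 lge tA(1) tA(2) g] by (simp_all add: Ng_def)
    have memB: "hdot_mem lam e 0 g" and nB: "hdot_norm lam e 0 g \<le> l0 powr ((0 - \<theta>) / 2) * Ng"
      using hdot_cmp[OF l0 lge order_refl th0 g] by (simp_all add: Ng_def)
    have bdle: "\<Phi> t - \<Psi> t \<le> bd t" for t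
    proof (cases "t > 0")
      case False
      then have "\<Phi> t - \<Psi> t = 0" by (simp add: \<Phi>_def \<Psi>_def ind_def)
      then show ?thesis using bd0[of t] by simp
    next
      case True
      define D where "D = S_sg lam e t g - Sh_sg lam e (V h) t x"
      have eq: "\<Phi> t - \<Psi> t = k t * (D \<bullet> E)"
        using True by (simp add: \<Phi>_def \<Psi>_def ind_def D_def inner_diff_left algebra_simps)
      have kpos: "k t \<ge> 0" by (simp add: k_def)
      have c1: "\<Phi> t - \<Psi> t \<le> k t * norm D * norm E"
        unfolding eq using mult_left_mono[OF norm_cauchy_schwarz[of D E] kpos] by (simp add: mult.assoc)
      show ?thesis
      proof (cases "t \<le> 1")
        case True2: True
        have "norm D \<le> C3a * h powr r * t powr ((tA - r) / 2) * hdot_norm lam e tA g"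
          unfolding D_def x_def by (rule bA[OF True memA h])
        also have "\<dots> \<le> C3a * h powr r * t powr ((tA - r) / 2) * (l0 powr ((tA - \<theta>) / 2) * Ng)"
          using C3a by (intro mult_left_mono nA) auto
        finally have "k t * norm D * norm E \<le> k t * (C3a * h powr r * t powr ((tA - r) / 2) * (l0 powr ((tA - \<theta>) / 2) * Ng)) * norm E"
          using kpos by (intro mult_right_mono mult_left_mono) auto
        also have "\<dots> = (h powr r * Ng * norm E) * (KA * (k t * t powr ((tA - r) / 2)))"
          by (simp add: KA_def mult_ac)
        also have "k t * t powr ((tA - r) / 2) = t powr qA"
          by (simp add: k_def qA_def powr_add)
        also have "(h powr r * Ng * norm E) * (KA * t powr qA) = bd t"
          using True True2 by (simp add: bd_def)
        finally show ?thesis using c1 by linarith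
      next
        case False2: False
        have "norm D \<le> C3b * h powr s * t powr ((0 - s) / 2) * hdot_norm lam e 0 g"
          unfolding D_def x_def by (rule bB[OF True memB h])
        also have "\<dots> \<le> C3b * h powr r * t powr ((0 - s) / 2) * (l0 powr ((0 - \<theta>) / 2) * Ng)"
        proof -
          have "h powr s \<le> h powr r" using h h1 rs by (intro powr_mono') auto
          moreover have "hdot_norm lam e 0 g \<ge> 0"
            using memB by (simp add: hdot_norm_def hdot_mem_def suminf_nonneg)
          ultimately show ?thesis using C3b nB
            by (intro mult_left_mono mult_right_mono mult_mono) (auto simp: mult_nonneg_nonneg)
        qed
        finally have "k t * norm D * norm E \<le> k t * (C3b * h powr r * t powr ((0 - s) / 2) * (l0 powr ((0 - \<theta>) / 2) * Ng)) * norm E"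
          using kpos by (intro mult_right_mono mult_left_mono) auto
        also have "\<dots> = (h powr r * Ng * norm E) * (KB * (k t * t powr ((0 - s) / 2)))"
          by (simp add: KB_def mult_ac)
        also have "k t * t powr ((0 - s) / 2) = t powr qB"
          by (simp add: k_def qB_def powr_add[symmetric])
        also have "(h powr r * Ng * norm E) * (KB * t powr qB) = bd t"
          using True False2 by (simp add: bd_def)
        finally show ?thesis using c1 by linarith
      qed
    qed
    have "Gamma \<beta> * (norm E)\<^sup>2 \<le> (h powr r * Ng * norm E) * (KA * J1 + KB * J2)"
      unfolding Id[symmetric] bdval[symmetric] by (rule integral_mono'[OF bdint bdle bd0])
    then have "norm E \<le> h powr r * Ng * (KA * J1 + KB * J2) / Gamma \<beta>"
    proof (cases "norm E = 0")
      case True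
      then show ?thesis using Ng KA KB J1 J2 Gp by simp
    next
      case False
      then have nE: "norm E > 0" by simp
      assume A: "Gamma \<beta> * (norm E)\<^sup>2 \<le> h powr r * Ng * norm E * (KA * J1 + KB * J2)"
      have "Gamma \<beta> * norm E * norm E \<le> (h powr r * Ng * (KA * J1 + KB * J2)) * norm E"
        using A by (simp add: power2_eq_square mult_ac)
      then have "Gamma \<beta> * norm E \<le> h powr r * Ng * (KA * J1 + KB * J2)"
        using nE by (simp add: mult_le_cancel_right)
      then show ?thesis using Gp by (simp add: pos_le_divide_eq mult.commute)
    qed
    also have "\<dots> \<le> C * h powr r * Ng"
    proof -
      have hN: "h powr r * Ng \<ge> 0" using Ng by simp
      have "h powr r * Ng * (KA * J1 + KB * J2) / Gamma \<beta> = ((KA * J1 + KB * J2) / Gamma \<beta>) * (h powr r * Ng)"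
        by simp
      also have "\<dots> \<le> C * (h powr r * Ng)"
        unfolding C_def using hN by (intro mult_right_mono) auto
      finally show ?thesis by (simp add: mult.assoc)
    qed
    finally show ?thesis by (simp add: E_def x_def Ng_def)
  qed
  show ?thesis
    using Cpos main h0_bounds unfolding r_def by (intro exI[of _ C] conjI exI[of _ 1]) auto
qed

end
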